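(* Consider the generalized Pólya–Young urn described in the context, with parameters $p\in\mathbb{N}$, $\sigma>0$, $\ell>0$, $w_0>0$, $b_0\ge0$. Then: (i) For all $N\ge0$ and $s\in\mathbb{N}_0$, \[ \mathbb{E}\big(\langle W_N/\sigma\rangle_s\big)=\langle w_0/\sigma\rangle_s\prod_{j=0}^{N-1}\frac{T_j+s\sigma}{T_j}. \] (ii) For all real $v$ with $|v-1|<1$, \[ \mathbb{E}\big(v^{W_N/\sigma}\big)=\sum_{s\ge0}\frac{(v-1)^s}{s!}\sum_{r=0}^{s}(-1)^{s-r}L_{s,r}\,\langle w_0/\sigma\rangle_r\prod_{j=0}^{N-1}\frac{T_j+r\sigma}{T_j}, \] where $L_{s,r}$ are the Lah numbers. (iii) Let $g_N=\prod_{j=0}^{N-1}\frac{T_j}{T_j+\sigma}$. Then $g_N\,N^{\Lambda}\to\kappa$ as $N\to\infty$, where \[ \kappa=p^{\Lambda}\prod_{r=0}^{p-1}\frac{\Gamma\!\left(\frac{r}{\psi}+\frac{w_0+b_0}{\sigma\psi}+\frac1\psi\right)}{\Gamma\!\left(\frac{r}{\psi}+\frac{w_0+b_0}{\sigma\psi}\right)}. \] (iv) $M_N:=g_NW_N$ is a non-negative martingale with respect to $(\mathcal{F}_N)$, it converges almost surely to a limit $M_\infty$, and $W_N/N^{\Lambda}\to M_\infty/\kappa$ almost surely.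
   Context: Generalized Pólya–Young urn: fix $p\in\mathbb{N}$, reals $\sigma>0$, $\ell>0$, and initial amounts $w_0>0$ (white) and $b_0\ge0$ (black); ball amounts are allowed to be real. Let $W_N,B_N$ be the white/black amounts after $N$ steps and $T_N=W_N+B_N$. At step $N\ge1$ a colour is drawn, white with conditional probability $W_{N-1}/T_{N-1}$, black otherwise. If $p\nmid N$, the drawn colour gains $\sigma$ (replacement matrix $\mathrm{diag}(\sigma,\sigma)$). If $p\mid N$, the replacement matrix is $\begin{pmatrix}\sigma&\ell\\0&\sigma+\ell\end{pmatrix}$: if white was drawn, white gains $\sigma$ and black gains $\ell$; if black was drawn, black gains $\sigma+\ell$. Hence for $N=np+k$ with $n\in\mathbb{N}_0$, $0\le k\le p-1$: $T_N=n(p\sigma+\ell)+k\sigma+w_0+b_0$ (deterministic). $\mathcal{F}_N$ is the $\sigma$-field generated by the first $N$ draws. Set $\psi=p+\ell/\sigma$ and $\Lambda=p/\psi=\frac{p}{p+\ell/\sigma}\in(0,1)$. Rising factorials: $\langle x\rangle_s=x(x+1)\cdots(x+s-1)$, $\langle x\rangle_0=1$. Lah numbers: $L_{0,0}=1$, $L_{s,0}=0$ for $s\ge1$, and $L_{s,r}=\binom{s}{r}\frac{(s-1)!}{(r-1)!}$ for $1\le r\le s$. *)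

theory Defs
  imports "HOL-Probability.Probability"
begin

text \<open>Amount of white after N steps; X n w = True iff white is drawn at step n (n >= 1).\<close>
primrec urnW :: "real \<Rightarrow> real \<Rightarrow> (nat \<Rightarrow> 'a \<Rightarrow> bool) \<Rightarrow> nat \<Rightarrow> 'a \<Rightarrow> real" where
  "urnW \<sigma> w0 X 0 \<omega> = w0"
| "urnW \<sigma> w0 X (Suc n) \<omega> = urnW \<sigma> w0 X n \<omega> + (if X (Suc n) \<omega> then \<sigma> else 0)"

primrec urnB :: "nat \<Rightarrow> real \<Rightarrow> real \<Rightarrow> real \<Rightarrow> (nat \<Rightarrow> 'a \<Rightarrow> bool) \<Rightarrow> nat \<Rightarrow> 'a \<Rightarrow> real" where
  "urnB p \<sigma> l b0 X 0 \<omega> = b0"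
| "urnB p \<sigma> l b0 X (Suc n) \<omega> = urnB p \<sigma> l b0 X n \<omega>
     + (if X (Suc n) \<omega> then 0 else \<sigma>) + (if p dvd Suc n then l else 0)"

definition urnT :: "nat \<Rightarrow> real \<Rightarrow> real \<Rightarrow> real \<Rightarrow> real \<Rightarrow> nat \<Rightarrow> real" where
  "urnT p \<sigma> l w0 b0 N =
     real (N div p) * (real p * \<sigma> + l) + real (N mod p) * \<sigma> + w0 + b0"

definition urnF :: "'a measure \<Rightarrow> (nat \<Rightarrow> 'a \<Rightarrow> bool) \<Rightarrow> nat \<Rightarrow> 'a measure" where
  "urnF M X N = sigma (space M) {{\<omega> \<in> space M. X i \<omega>} | i. 1 \<le> i \<and> i \<le> N}"

definition lah :: "nat \<Rightarrow> nat \<Rightarrow> real" where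
  "lah s r = (if s = 0 \<and> r = 0 then 1
              else if r = 0 \<or> s < r then 0
              else real (s choose r) * fact (s - 1) / fact (r - 1))"

definition urn_g :: "nat \<Rightarrow> real \<Rightarrow> real \<Rightarrow> real \<Rightarrow> real \<Rightarrow> nat \<Rightarrow> real" where
  "urn_g p \<sigma> l w0 b0 N =
     (\<Prod>j<N. urnT p \<sigma> l w0 b0 j / (urnT p \<sigma> l w0 b0 j + \<sigma>))"

definition urn_psi :: "nat \<Rightarrow> real \<Rightarrow> real \<Rightarrow> real" where
  "urn_psi p \<sigma> l = real p + l / \<sigma>"

definition urn_Lambda :: "nat \<Rightarrow> real \<Rightarrow> real \<Rightarrow> real" where
  "urn_Lambda p \<sigma> l = real p / urn_psi p \<sigma> l"

definition urn_kappa :: "nat \<Rightarrow> real \<Rightarrow> real \<Rightarrow> real \<Rightarrow> real \<Rightarrow> real" where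
  "urn_kappa p \<sigma> l w0 b0 =
     real p powr urn_Lambda p \<sigma> l *
     (\<Prod>r<p. Gamma (real r / urn_psi p \<sigma> l + (w0 + b0) / (\<sigma> * urn_psi p \<sigma> l) + 1 / urn_psi p \<sigma> l)
            / Gamma (real r / urn_psi p \<sigma> l + (w0 + b0) / (\<sigma> * urn_psi p \<sigma> l)))"

end

theory Submission
  imports Defs "HOL-Analysis.Generalised_Binomial_Theorem"
begin

locale urn =
  fixes M :: "'a measure" and X :: "nat \<Rightarrow> 'a \<Rightarrow> bool"
    and p :: nat and \<sigma> l w0 b0 :: real
  assumes ps: "prob_space M"
    and p1: "p \<ge> 1" and sp: "\<sigma> > 0" and lp: "l > 0" and w0p: "w0 > 0" and b0p: "b0 \<ge> 0"
    and Xm: "\<And>n. X n \<in> measurable M (count_space UNIV)"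
    and ce: "\<And>n. AE \<omega> in M.
           real_cond_exp M (urnF M X n) (\<lambda>\<omega>. if X (Suc n) \<omega> then 1 else 0) \<omega>
             = urnW \<sigma> w0 X n \<omega> / urnT p \<sigma> l w0 b0 n"
begin

abbreviation W where "W n \<omega> \<equiv> urnW \<sigma> w0 X n \<omega>"
abbreviation T where "T n \<equiv> urnT p \<sigma> l w0 b0 n"
abbreviation F where "F n \<equiv> urnF M X n"
abbreviation g where "g n \<equiv> urn_g p \<sigma> l w0 b0 n"
abbreviation xi where "xi n \<equiv> (\<lambda>\<omega>. if X n \<omega> then 1 else 0 :: real)"

lemma T_alt: "T n = w0 + b0 + real n * \<sigma> + real (n div p) * l"
proof -
  have "real n = real (n div p) * real p + real (n mod p)"
    by (metis div_mult_mod_eq of_nat_add of_nat_mult)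
  then show ?thesis unfolding urnT_def by (simp add: algebra_simps)
qed

lemma T_pos: "T n > 0"
  using T_alt[of n] w0p b0p sp lp by (simp add: add_pos_nonneg)

lemma W_Suc: "W (Suc n) \<omega> = W n \<omega> + \<sigma> * xi (Suc n) \<omega>"
  by simp

lemma W_range: "\<exists>k\<le>n. W n \<omega> = w0 + real k * \<sigma>"
proof (induction n)
  case 0 then show ?case by simp
next
  case (Suc n)
  then obtain k where k: "k \<le> n" "W n \<omega> = w0 + real k * \<sigma>" by blast
  show ?case
  proof (cases "X (Suc n) \<omega>")
    case True
    then show ?thesis using k by (intro exI[of _ "Suc k"]) (simp add: algebra_simps)
  next
    case False
    then show ?thesis using k by (intro exI[of _ k]) simp
  qed
qed

lemma W_ge: "W n \<omega> \<ge> w0"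
  using W_range[of n \<omega>] sp by auto

lemma W_le: "W n \<omega> \<le> w0 + real n * \<sigma>"
  using W_range[of n \<omega>] sp by (auto intro: mult_right_mono)

lemma Xset: "{\<omega> \<in> space M. X i \<omega>} \<in> sets M"
proof -
  have "X i -` {True} \<inter> space M \<in> sets M"
    using measurable_sets[OF Xm[of i], of "{True}"] by simp
  moreover have "X i -` {True} \<inter> space M = {\<omega> \<in> space M. X i \<omega>}" by auto
  ultimately show ?thesis by simp
qed

lemma gen_sub: "{{\<omega> \<in> space M. X i \<omega>} | i. 1 \<le> i \<and> i \<le> N} \<subseteq> Pow (space M)"
  by auto

lemma space_F: "space (F N) = space M"
  unfolding urnF_def using gen_sub by (simp add: space_measure_of_conv)

lemma sets_F: "sets (F N) = sigma_sets (space M) {{\<omega> \<in> space M. X i \<omega>} | i. 1 \<le> i \<and> i \<le> N}"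
  unfolding urnF_def using gen_sub by (simp add: sets_measure_of)

lemma subalg: "subalgebra M (F N)"
  unfolding subalgebra_def
proof
  show "space (F N) = space M" by (rule space_F)
  have "sigma_sets (space M) {{\<omega> \<in> space M. X i \<omega>} | i. 1 \<le> i \<and> i \<le> N} \<subseteq> sets M"
    by (rule sets.sigma_sets_subset) (use Xset in auto)
  then show "sets (F N) \<subseteq> sets M" by (simp add: sets_F)
qed

lemma XsetF: "1 \<le> i \<Longrightarrow> i \<le> N \<Longrightarrow> {\<omega> \<in> space M. X i \<omega>} \<in> sets (F N)"
  unfolding sets_F by (rule sigma_sets.Basic) auto

lemma hW_measF: fixes h :: "real \<Rightarrow> real" shows "n \<le> N \<Longrightarrow> (\<lambda>\<omega>. h (W n \<omega>)) \<in> borel_measurable (F N)"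
proof (induction n arbitrary: h)
  case 0 then show ?case by simp
next
  case (Suc n)
  have eq: "(\<lambda>\<omega>. h (W (Suc n) \<omega>)) =
     (\<lambda>\<omega>. if \<omega> \<in> {\<omega>. X (Suc n) \<omega>} then h (W n \<omega> + \<sigma>) else h (W n \<omega>))"
    by auto
  have A: "{\<omega>. X (Suc n) \<omega>} \<inter> space (F N) \<in> sets (F N)"
    using XsetF[of "Suc n" N] Suc.prems by (simp add: space_F Int_commute Collect_conj_eq[symmetric] Int_def)
  show ?case unfolding eq
    by (rule measurable_If_set[OF _ _ A]) (use Suc in auto)
qed

lemma hW_meas: fixes h :: "real \<Rightarrow> real" shows "(\<lambda>\<omega>. h (W n \<omega>)) \<in> borel_measurable M"
  by (rule measurable_from_subalg[OF subalg hW_measF[of n n]]) simp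

lemma hW_bound: fixes h :: "real \<Rightarrow> real" shows "\<bar>h (W n \<omega>)\<bar> \<le> (\<Sum>k\<le>n. \<bar>h (w0 + real k * \<sigma>)\<bar>)"
proof -
  obtain k where "k \<le> n" "W n \<omega> = w0 + real k * \<sigma>" using W_range by blast
  then show ?thesis
    by (auto intro!: member_le_sum[of k "{..n}" "\<lambda>k. \<bar>h (w0 + real k * \<sigma>)\<bar>"])
qed

lemma fin: "finite_measure M"
  using ps by (simp add: prob_space_def)

lemma int_bounded: fixes f :: "'a \<Rightarrow> real" shows "f \<in> borel_measurable M \<Longrightarrow> (\<And>\<omega>. \<omega> \<in> space M \<Longrightarrow> \<bar>f \<omega>\<bar> \<le> B) \<Longrightarrow> integrable M f"
  by (rule finite_measure.integrable_const_bound[OF fin, of f B]) auto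

lemma hW_int: fixes h :: "real \<Rightarrow> real" shows "integrable M (\<lambda>\<omega>. h (W n \<omega>))"
  by (rule int_bounded[OF hW_meas]) (rule hW_bound)

lemma xi_meas: "xi n \<in> borel_measurable M"
  by (rule measurable_compose[OF Xm[of n], of "\<lambda>b. if b then 1 else 0"]) simp

lemma K1:
  assumes fm: "f \<in> borel_measurable (F N)" and fb: "\<And>\<omega>. \<omega> \<in> space M \<Longrightarrow> \<bar>f \<omega>\<bar> \<le> B"
  shows "(\<integral>\<omega>. f \<omega> * xi (Suc N) \<omega> \<partial>M) = (\<integral>\<omega>. f \<omega> * (W N \<omega> / T N) \<partial>M)"
proof -
  interpret S: finite_measure_subalgebra M "F N"
    using fin subalg by (simp add: finite_measure_subalgebra_def finite_measure_subalgebra_axioms_def)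
  have fM: "f \<in> borel_measurable M" by (rule measurable_from_subalg[OF subalg fm])
  have "integrable M (\<lambda>\<omega>. f \<omega> * xi (Suc N) \<omega>)"
    by (rule int_bounded[of _ B]) (use fM xi_meas fb order_trans[OF abs_ge_zero fb] in auto)
  from S.real_cond_exp_intg(2)[OF this fm xi_meas]
  have "(\<integral>\<omega>. f \<omega> * real_cond_exp M (F N) (xi (Suc N)) \<omega> \<partial>M) = (\<integral>\<omega>. f \<omega> * xi (Suc N) \<omega> \<partial>M)" .
  moreover have "(\<integral>\<omega>. f \<omega> * real_cond_exp M (F N) (xi (Suc N)) \<omega> \<partial>M) = (\<integral>\<omega>. f \<omega> * (W N \<omega> / T N) \<partial>M)"
    by (rule integral_cong_AE) (use ce[of N] fM hW_meas[of "\<lambda>x. x" N] in \<open>auto intro!: borel_measurable_times\<close>)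
  ultimately show ?thesis by simp
qed

end

lemma lah_0: "lah (Suc s) 0 = 0" by (simp add: lah_def)

lemma lah_closed: "1 \<le> r \<Longrightarrow> r \<le> s \<Longrightarrow> lah s r = fact s * fact (s - 1) / (fact r * fact (s - r) * fact (r - 1))"
  by (simp add: lah_def binomial_fact)

lemma lah_big: "s < r \<Longrightarrow> lah s r = 0" by (simp add: lah_def)

lemma lah_alg:
  fixes A B C b c :: real
  assumes "A > 0" "B > 0" "C > 0" "b \<ge> 0" "c \<ge> 0"
  shows "((b+c+3)*(b+c+2)*A) * ((b+c+2)*A) / (((b+2)*(b+1)*B) * ((c+1)*C) * ((b+1)*B))
    = ((b+c+2)*A)*A/(((b+1)*B)*((c+1)*C)*B) + (2*b+c+4) * (((b+c+2)*A)*A/(((b+2)*(b+1)*B)*C*((b+1)*B)))"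
proof -
  have nz: "b + 1 \<noteq> 0" "b + 2 \<noteq> 0" "c + 1 \<noteq> 0" "A \<noteq> 0" "B \<noteq> 0" "C \<noteq> 0" using assms by simp_all
  have "((b+c+3)*(b+c+2)*A) * ((b+c+2)*A) / (((b+2)*(b+1)*B) * ((c+1)*C) * ((b+1)*B))
     = (A*A/(B*B*C)) * ((b+c+3)*(b+c+2)*(b+c+2)/((b+2)*(b+1)*(c+1)*(b+1)))" using nz by (simp add: field_simps)
  also have "(b+c+3)*(b+c+2)*(b+c+2)/((b+2)*(b+1)*(c+1)*(b+1)) = (b+c+2)/((b+1)*(c+1)) + (2*b+c+4)*(b+c+2)/((b+2)*(b+1)*(b+1))"
    using nz by (simp add: divide_simps) (simp add: algebra_simps)
  also have "(A*A/(B*B*C)) * ((b+c+2)/((b+1)*(c+1)) + (2*b+c+4)*(b+c+2)/((b+2)*(b+1)*(b+1)))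
     = ((b+c+2)*A)*A/(((b+1)*B)*((c+1)*C)*B) + (2*b+c+4) * (((b+c+2)*A)*A/(((b+2)*(b+1)*B)*C*((b+1)*B)))"
    by (simp add: algebra_simps add_divide_distrib)
  finally show ?thesis .
qed

lemma lah_rec: "lah (Suc s) (Suc r) = lah s r + real (s + Suc r) * lah s (Suc r)"
proof (cases "s = 0")
  case True then show ?thesis by (cases r) (simp_all add: lah_def)
next
  case s: False
  show ?thesis
  proof (cases "r = 0")
    case True
    then show ?thesis using s
      by (simp add: lah_closed lah_def fact_Suc) (metis Suc_pred fact_Suc of_nat_Suc neq0_conv)
  next
    case r: False
    show ?thesis
    proof (cases "r < s")
      case True
      then obtain b c where bc: "r = Suc b" "s = Suc (b + c + 1)" using r
        by (metis add.commute add_Suc_right less_iff_Suc_add not0_implies_Suc plus_1_eq_Suc)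
      have e1: "lah (Suc s) (Suc r) = fact (b+c+3) * fact (b+c+2) / (fact (b+2) * fact (c+1) * fact (b+1))"
        by (subst lah_closed) (simp_all add: bc numeral_eq_Suc)
      have e2: "lah s r = fact (b+c+2) * fact (b+c+1) / (fact (b+1) * fact (c+1) * fact b)"
        by (subst lah_closed) (simp_all add: bc numeral_eq_Suc)
      have e3: "lah s (Suc r) = fact (b+c+2) * fact (b+c+1) / (fact (b+2) * fact c * fact (b+1))"
        by (subst lah_closed) (simp_all add: bc numeral_eq_Suc)
      define A where "A = (fact (b+c+1) :: real)"
      define B where "B = (fact b :: real)"
      define C where "C = (fact c :: real)"
      have f1: "fact (b+c+2) = (real b + real c + 2) * A" "fact (b+c+3) = (real b + real c + 3) * (real b + real c + 2) * A"
        "fact (b+1) = (real b + 1) * B" "fact (b+2) = (real b + 2) * (real b + 1) * B" "fact (c+1) = (real c + 1) * C"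
        by (simp_all add: A_def B_def C_def numeral_eq_Suc fact_Suc algebra_simps)
      have pos: "A > 0" "B > 0" "C > 0" by (simp_all add: A_def B_def C_def)
      have sr: "real (s + Suc r) = 2 * real b + real c + 4" by (simp add: bc)
      have nz: "real b + 1 > 0" "real b + 2 > 0" "real c + 1 > 0" "real b + real c + 2 > 0" by simp_all
      show ?thesis
        unfolding e1 e2 e3 sr f1 A_def[symmetric] B_def[symmetric] C_def[symmetric]
        by (rule lah_alg) (use pos in auto)
    next
      case False
      then show ?thesis
      proof (cases "r = s")
        case True
        then show ?thesis using s by (simp add: lah_def)
      next
        case False
        then show ?thesis using \<open>\<not> r < s\<close> by (simp add: lah_def)
      qed
    qed
  qed
qed

lemma poch_shift: "pochhammer (y::real) r * (y - real s) = pochhammer y (Suc r) - real (r + s) * pochhammer y r"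
  by (simp add: pochhammer_Suc algebra_simps)

lemma lah_falling: "(\<Sum>r\<le>s. (-1) ^ (s - r) * lah s r * pochhammer (y::real) r) = (\<Prod>i<s. y - real i)"
proof (induction s)
  case 0 then show ?case by (simp add: lah_def)
next
  case (Suc s)
  have "(\<Prod>i<Suc s. y - real i) = (\<Sum>r\<le>s. (-1) ^ (s - r) * lah s r * pochhammer y r) * (y - real s)"
    using Suc by simp
  also have "\<dots> = (\<Sum>r\<le>s. (-1) ^ (s - r) * lah s r * pochhammer y (Suc r))
      + (\<Sum>r\<le>s. (-1) ^ (Suc s - r) * (real (s + r) * lah s r) * pochhammer y r)"
  proof -
    have "(-1) ^ (s - r) * lah s r * pochhammer y r * (y - real s) = (-1) ^ (s - r) * lah s r * pochhammer y (Suc r)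
        + (-1) ^ (Suc s - r) * (real (s + r) * lah s r) * pochhammer y r" if "r \<in> {..s}" for r
    proof -
      have "(-1::real) ^ (Suc s - r) = - ((-1) ^ (s - r))" using that by (simp add: Suc_diff_le)
      then show ?thesis
        by (simp add: pochhammer_Suc algebra_simps)
    qed
    then show ?thesis by (simp add: sum_distrib_right sum.distrib[symmetric])
  qed
  also have "\<dots> = (\<Sum>r\<le>Suc s. (-1) ^ (Suc s - r) * lah (Suc s) r * pochhammer y r)"
  proof -
    have A: "(\<Sum>r\<le>Suc s. (-1) ^ (Suc s - r) * lah (Suc s) r * pochhammer y r)
      = (\<Sum>r\<le>s. (-1) ^ (Suc s - Suc r) * lah (Suc s) (Suc r) * pochhammer y (Suc r))"
      by (subst sum.atMost_Suc_shift) (simp add: lah_0)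
    have B: "(\<Sum>r\<le>s. (-1) ^ (Suc s - Suc r) * lah (Suc s) (Suc r) * pochhammer y (Suc r))
      = (\<Sum>r\<le>s. (-1) ^ (s - r) * lah s r * pochhammer y (Suc r))
        + (\<Sum>r\<le>s. (-1) ^ (s - r) * (real (s + Suc r) * lah s (Suc r)) * pochhammer y (Suc r))"
      by (simp add: lah_rec sum.distrib[symmetric] algebra_simps)
    have C: "(\<Sum>r\<le>s. (-1) ^ (s - r) * (real (s + Suc r) * lah s (Suc r)) * pochhammer y (Suc r))
      = (\<Sum>r\<le>s. (-1) ^ (Suc s - r) * (real (s + r) * lah s r) * pochhammer y r)"
    proof -
      have "(\<Sum>r\<le>Suc s. (-1) ^ (Suc s - r) * (real (s + r) * lah s r) * pochhammer y r)
        = (\<Sum>r\<le>s. (-1) ^ (Suc s - Suc r) * (real (s + Suc r) * lah s (Suc r)) * pochhammer y (Suc r))"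
        by (subst sum.atMost_Suc_shift) (cases s; simp add: lah_def)
      moreover have "(\<Sum>r\<le>Suc s. (-1) ^ (Suc s - r) * (real (s + r) * lah s r) * pochhammer y r)
         = (\<Sum>r\<le>s. (-1) ^ (Suc s - r) * (real (s + r) * lah s r) * pochhammer y r)"
        by (simp add: lah_big)
      ultimately show ?thesis by simp
    qed
    show ?thesis using A B C by simp
  qed
  finally show ?case by simp
qed

lemma lah_gchoose: "(\<Sum>r\<le>s. (-1) ^ (s - r) * lah s r * pochhammer (y::real) r) = fact s * (y gchoose s)"
  by (simp add: lah_falling gbinomial_prod_rev atLeast0LessThan)

lemma poch_diff: "(x::real) * (pochhammer (x+1) s - pochhammer x s) = real s * pochhammer x s"
proof (cases s)
  case 0 then show ?thesis by simp
next
  case (Suc n)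
  then show ?thesis unfolding Suc pochhammer_rec[of x n] pochhammer_Suc[of "x+1" n] by (simp add: algebra_simps)
qed

context urn begin

lemma K2:
  assumes fm: "f \<in> borel_measurable (F N)" and fb: "\<And>\<omega>. \<omega> \<in> space M \<Longrightarrow> \<bar>f \<omega>\<bar> \<le> B"
  shows "(\<integral>\<omega>. f \<omega> * W (Suc N) \<omega> \<partial>M) = (T N + \<sigma>) / T N * (\<integral>\<omega>. f \<omega> * W N \<omega> \<partial>M)"
proof -
  have fM: "f \<in> borel_measurable M" by (rule measurable_from_subalg[OF subalg fm])
  have B0: "0 \<le> B" using fb order_trans[OF abs_ge_zero fb] ps prob_space.not_empty by blast
  have i1: "integrable M (\<lambda>\<omega>. f \<omega> * W N \<omega>)"
  proof (rule int_bounded[of _ "B * (w0 + real N * \<sigma>)"])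
    show "(\<lambda>\<omega>. f \<omega> * W N \<omega>) \<in> borel_measurable M" using fM hW_meas[of "\<lambda>x. x" N] by simp
    fix \<omega> assume "\<omega> \<in> space M"
    have "\<bar>W N \<omega>\<bar> \<le> w0 + real N * \<sigma>" using W_le W_ge w0p by (metis abs_of_pos less_le_trans)
    then show "\<bar>f \<omega> * W N \<omega>\<bar> \<le> B * (w0 + real N * \<sigma>)"
      using fb[OF \<open>\<omega> \<in> space M\<close>] by (simp add: abs_mult mult_mono B0)
  qed
  have i2: "integrable M (\<lambda>\<omega>. f \<omega> * xi (Suc N) \<omega>)"
    by (rule int_bounded[of _ B]) (use fM xi_meas fb B0 in auto)
  have "(\<integral>\<omega>. f \<omega> * W (Suc N) \<omega> \<partial>M) = (\<integral>\<omega>. f \<omega> * W N \<omega> + \<sigma> * (f \<omega> * xi (Suc N) \<omega>) \<partial>M)"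
    by (rule Bochner_Integration.integral_cong) (auto simp: algebra_simps)
  also have "\<dots> = (\<integral>\<omega>. f \<omega> * W N \<omega> \<partial>M) + \<sigma> * (\<integral>\<omega>. f \<omega> * xi (Suc N) \<omega> \<partial>M)"
    using i1 i2 by simp
  also have "(\<integral>\<omega>. f \<omega> * xi (Suc N) \<omega> \<partial>M) = (\<integral>\<omega>. f \<omega> * (W N \<omega> / T N) \<partial>M)"
    by (rule K1[OF fm fb])
  also have "\<dots> = (\<integral>\<omega>. f \<omega> * W N \<omega> \<partial>M) / T N"
    by (simp add: mult.assoc[symmetric])
  finally show ?thesis using T_pos[of N] by (simp add: field_simps)
qed

lemma part1: "(\<integral>\<omega>. pochhammer (W N \<omega> / \<sigma>) s \<partial>M)
   = pochhammer (w0 / \<sigma>) s * (\<Prod>j<N. (T j + real s * \<sigma>) / T j)"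
proof (induction N)
  case 0
  then show ?case using ps by (simp add: prob_space.prob_space)
next
  case (Suc N)
  define D where "D = (\<lambda>\<omega>. pochhammer (W N \<omega> / \<sigma> + 1) s - pochhammer (W N \<omega> / \<sigma>) s)"
  have Dm: "D \<in> borel_measurable (F N)"
    unfolding D_def using hW_measF[of N N "\<lambda>y. pochhammer (y / \<sigma> + 1) s - pochhammer (y / \<sigma>) s"] by simp
  have Db: "\<bar>D \<omega>\<bar> \<le> (\<Sum>k\<le>N. \<bar>pochhammer ((w0 + real k * \<sigma>) / \<sigma> + 1) s - pochhammer ((w0 + real k * \<sigma>) / \<sigma>) s\<bar>)" for \<omega>
    unfolding D_def using hW_bound[of "\<lambda>y. pochhammer (y / \<sigma> + 1) s - pochhammer (y / \<sigma>) s" N \<omega>] by simp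
  have pt: "pochhammer (W (Suc N) \<omega> / \<sigma>) s = pochhammer (W N \<omega> / \<sigma>) s + D \<omega> * xi (Suc N) \<omega>" for \<omega>
    using sp by (auto simp: D_def add_divide_distrib)
  have iP: "integrable M (\<lambda>\<omega>. pochhammer (W N \<omega> / \<sigma>) s)"
    using hW_int[of "\<lambda>y. pochhammer (y / \<sigma>) s" N] by simp
  have iD: "integrable M (\<lambda>\<omega>. D \<omega> * xi (Suc N) \<omega>)"
    by (rule int_bounded[OF _ ]) (use measurable_from_subalg[OF subalg Dm] xi_meas Db in \<open>auto intro: order_trans[OF _ Db]\<close>)
  have "(\<integral>\<omega>. pochhammer (W (Suc N) \<omega> / \<sigma>) s \<partial>M)
     = (\<integral>\<omega>. pochhammer (W N \<omega> / \<sigma>) s \<partial>M) + (\<integral>\<omega>. D \<omega> * xi (Suc N) \<omega> \<partial>M)"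
    unfolding pt using iP iD by simp
  also have "(\<integral>\<omega>. D \<omega> * xi (Suc N) \<omega> \<partial>M) = (\<integral>\<omega>. D \<omega> * (W N \<omega> / T N) \<partial>M)"
    by (rule K1[OF Dm Db])
  also have "\<dots> = (\<integral>\<omega>. (real s * \<sigma> / T N) * pochhammer (W N \<omega> / \<sigma>) s \<partial>M)"
  proof (rule Bochner_Integration.integral_cong)
    fix \<omega>
    have "D \<omega> * (W N \<omega> / T N) = (\<sigma> / T N) * ((W N \<omega> / \<sigma>) * D \<omega>)" using sp by (simp add: field_simps)
    also have "(W N \<omega> / \<sigma>) * D \<omega> = real s * pochhammer (W N \<omega> / \<sigma>) s"
      unfolding D_def by (rule poch_diff)
    finally show "D \<omega> * (W N \<omega> / T N) = (real s * \<sigma> / T N) * pochhammer (W N \<omega> / \<sigma>) s" by (simp add: ac_simps)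
  qed simp
  also have "\<dots> = (real s * \<sigma> / T N) * (\<integral>\<omega>. pochhammer (W N \<omega> / \<sigma>) s \<partial>M)" by simp
  finally show ?case unfolding Suc using T_pos[of N] by (simp add: field_simps)
qed

definition q where "q N k = (\<integral>\<omega>. (if W N \<omega> = w0 + real k * \<sigma> then 1 else 0) \<partial>M)"

lemma E_fin:
  fixes h :: "real \<Rightarrow> real"
  shows "(\<integral>\<omega>. h (W N \<omega>) \<partial>M) = (\<Sum>k\<le>N. h (w0 + real k * \<sigma>) * q N k)"
proof -
  have pt: "h (W N \<omega>) = (\<Sum>k\<le>N. h (w0 + real k * \<sigma>) * (if W N \<omega> = w0 + real k * \<sigma> then 1 else 0))" for \<omega>
  proof -
    obtain k0 where k0: "k0 \<le> N" "W N \<omega> = w0 + real k0 * \<sigma>" using W_range by blast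
    have "(W N \<omega> = w0 + real k * \<sigma>) \<longleftrightarrow> k = k0" for k
      using k0(2) sp by auto
    then have "(\<Sum>k\<le>N. h (w0 + real k * \<sigma>) * (if W N \<omega> = w0 + real k * \<sigma> then 1 else 0))
       = (\<Sum>k\<le>N. if k = k0 then h (w0 + real k * \<sigma>) else 0)"
      by (intro sum.cong) auto
    also have "\<dots> = h (W N \<omega>)" using k0 by simp
    finally show ?thesis by simp
  qed
  have "(\<integral>\<omega>. h (W N \<omega>) \<partial>M) = (\<integral>\<omega>. (\<Sum>k\<le>N. h (w0 + real k * \<sigma>) * (if W N \<omega> = w0 + real k * \<sigma> then 1 else 0)) \<partial>M)"
    by (subst pt) simp
  also have "\<dots> = (\<Sum>k\<le>N. (\<integral>\<omega>. h (w0 + real k * \<sigma>) * (if W N \<omega> = w0 + real k * \<sigma> then 1 else 0) \<partial>M))"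
    by (rule Bochner_Integration.integral_sum) (use hW_int[of "\<lambda>y. h (w0 + real _ * \<sigma>) * (if y = w0 + real _ * \<sigma> then 1 else 0)"] in simp)
  also have "\<dots> = (\<Sum>k\<le>N. h (w0 + real k * \<sigma>) * q N k)"
    unfolding q_def by simp
  finally show ?thesis .
qed

lemma part2:
  assumes v: "\<bar>v - 1\<bar> < 1"
  shows "(\<lambda>s. (v - 1) ^ s / fact s *
              (\<Sum>r\<le>s. (-1) ^ (s - r) * lah s r * pochhammer (w0 / \<sigma>) r *
                 (\<Prod>j<N. (T j + real r * \<sigma>) / T j)))
        sums (\<integral>\<omega>. v powr (W N \<omega> / \<sigma>) \<partial>M)"
proof -
  have tm: "(v - 1) ^ s / fact s *
              (\<Sum>r\<le>s. (-1) ^ (s - r) * lah s r * pochhammer (w0 / \<sigma>) r *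
                 (\<Prod>j<N. (T j + real r * \<sigma>) / T j))
      = (\<Sum>k\<le>N. q N k * (((w0 + real k * \<sigma>) / \<sigma> gchoose s) * (v - 1) ^ s))" for s
  proof -
    have "(\<Sum>r\<le>s. (-1) ^ (s - r) * lah s r * pochhammer (w0 / \<sigma>) r *
                 (\<Prod>j<N. (T j + real r * \<sigma>) / T j))
        = (\<Sum>r\<le>s. (-1) ^ (s - r) * lah s r * (\<Sum>k\<le>N. pochhammer ((w0 + real k * \<sigma>) / \<sigma>) r * q N k))"
      by (intro sum.cong refl) (simp add: mult.assoc part1[symmetric] E_fin[of "\<lambda>y. pochhammer (y / \<sigma>) _"])
    also have "\<dots> = (\<Sum>k\<le>N. q N k * (\<Sum>r\<le>s. (-1) ^ (s - r) * lah s r * pochhammer ((w0 + real k * \<sigma>) / \<sigma>) r))"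
      by (simp add: sum_distrib_left sum_distrib_right algebra_simps sum.swap[of _ "{..s}"])
    also have "\<dots> = (\<Sum>k\<le>N. q N k * (fact s * ((w0 + real k * \<sigma>) / \<sigma> gchoose s)))"
      by (simp add: lah_gchoose)
    finally show ?thesis by (simp add: sum_distrib_left algebra_simps)
  qed
  have "(\<lambda>s. \<Sum>k\<le>N. q N k * (((w0 + real k * \<sigma>) / \<sigma> gchoose s) * (v - 1) ^ s))
      sums (\<Sum>k\<le>N. q N k * (1 + (v - 1)) powr ((w0 + real k * \<sigma>) / \<sigma>))"
    by (intro sums_sum sums_mult gen_binomial_real) (use v in simp)
  also have "(\<Sum>k\<le>N. q N k * (1 + (v - 1)) powr ((w0 + real k * \<sigma>) / \<sigma>)) = (\<integral>\<omega>. v powr (W N \<omega> / \<sigma>) \<partial>M)"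
    by (simp add: E_fin[of "\<lambda>y. v powr (y / \<sigma>)"] mult.commute)
  finally show ?thesis unfolding tm .
qed

end

lemma Gamma_pos: "x > 0 \<Longrightarrow> Gamma (x::real) > 0"
  by (simp add: Gamma_real_pos_exp)

lemma poch_ratio_lim:
  fixes a d :: real assumes a: "a > 0" and d: "d > 0"
  shows "(\<lambda>n. pochhammer a n / pochhammer (a + d) n * real n powr d) \<longlonglongrightarrow> Gamma (a + d) / Gamma a"
proof -
  have lim: "(\<lambda>n. Gamma_series' (a + d) n / Gamma_series' a n) \<longlonglongrightarrow> Gamma (a + d) / Gamma a"
    by (intro tendsto_divide Gamma_series'_LIMSEQ) (use Gamma_pos[OF a] in simp)
  have "eventually (\<lambda>n. Gamma_series' (a + d) n / Gamma_series' a n = pochhammer a n / pochhammer (a + d) n * real n powr d) sequentially"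
    using eventually_gt_at_top[of 0]
  proof eventually_elim
    case (elim n)
    have p1: "pochhammer a n > 0" "pochhammer (a + d) n > 0" using a d by (simp_all add: pochhammer_pos)
    have "exp ((a + d) * ln (real n)) = exp (a * ln (real n)) * real n powr d"
      using elim by (simp add: powr_def exp_add[symmetric] algebra_simps)
    then show ?case using p1 unfolding Gamma_series'_def
      by (simp add: field_simps)
  qed
  from tendsto_cong[OF this] lim show ?thesis by simp
qed

context urn begin

definition psi where "psi = real p + l / \<sigma>"
definition dlt where "dlt = 1 / psi"
definition c0 where "c0 = (w0 + b0) / (\<sigma> * psi)"
definition ar where "ar r = real r / psi + c0"

lemma psi_pos: "psi > 0" using p1 sp lp by (simp add: psi_def add_pos_nonneg)
lemma c0_pos: "c0 > 0" using psi_pos sp w0p b0p by (simp add: c0_def)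
lemma ar_pos: "ar r > 0" using c0_pos psi_pos by (simp add: ar_def add_nonneg_pos)
lemma dlt_pos: "dlt > 0" using psi_pos by (simp add: dlt_def)

lemma T_mp: assumes "r < p" shows "T (m * p + r) / (T (m * p + r) + \<sigma>) = (real m + ar r) / (real m + ar r + dlt)"
proof -
  have dm: "(m * p + r) div p = m" "(m * p + r) mod p = r" using assms by auto
  have sps: "\<sigma> * psi = real p * \<sigma> + l" using sp by (simp add: psi_def field_simps)
  have e: "\<sigma> * psi * (real m + ar r) = real m * (\<sigma> * psi) + real r * \<sigma> + (w0 + b0)"
    unfolding ar_def c0_def using sp psi_pos by (simp add: field_simps)
  have "T (m * p + r) = real m * (\<sigma> * psi) + real r * \<sigma> + (w0 + b0)"
    unfolding urnT_def dm sps by (simp add: algebra_simps)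
  also have "\<dots> = \<sigma> * psi * (real m + ar r)" using e by simp
  finally have "T (m * p + r) = \<sigma> * psi * (real m + ar r)" .
  moreover have "\<sigma> = \<sigma> * psi * dlt" using psi_pos by (simp add: dlt_def)
  ultimately have "T (m * p + r) / (T (m * p + r) + \<sigma>) = (\<sigma> * psi * (real m + ar r)) / (\<sigma> * psi * (real m + ar r + dlt))"
    by (metis distrib_left)
  also have "\<dots> = (real m + ar r) / (real m + ar r + dlt)" using sp psi_pos by simp
  finally show ?thesis .
qed

lemma g_block: "g (n * p) = (\<Prod>r<p. pochhammer (ar r) n / pochhammer (ar r + dlt) n)"
proof -
  have "g (n * p) = (\<Prod>j<n * p. T j / (T j + \<sigma>))" by (simp add: urn_g_def)
  also have "\<dots> = (\<Prod>m<n. \<Prod>j\<in>{m*p..<m*p+p}. T j / (T j + \<sigma>))" by (rule prod.nat_group[symmetric])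
  also have "\<dots> = (\<Prod>m<n. \<Prod>r<p. T (m * p + r) / (T (m * p + r) + \<sigma>))"
  proof (rule prod.cong[OF refl])
    fix m
    show "(\<Prod>j\<in>{m*p..<m*p+p}. T j / (T j + \<sigma>)) = (\<Prod>r<p. T (m * p + r) / (T (m * p + r) + \<sigma>))"
      using prod.shift_bounds_nat_ivl[of "\<lambda>j. T j / (T j + \<sigma>)" 0 "m*p" p]
      by (simp add: atLeast0LessThan add.commute)
  qed
  also have "\<dots> = (\<Prod>m<n. \<Prod>r<p. (real m + ar r) / (real m + ar r + dlt))"
    by (intro prod.cong refl) (simp add: T_mp)
  also have "\<dots> = (\<Prod>r<p. \<Prod>m<n. (real m + ar r) / (real m + ar r + dlt))" by (rule prod.swap)
  also have "\<dots> = (\<Prod>r<p. pochhammer (ar r) n / pochhammer (ar r + dlt) n)"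
    by (simp add: pochhammer_prod prod_dividef atLeast0LessThan add.commute add.left_commute)
  finally show ?thesis .
qed

lemma Lambda_eq: "urn_Lambda p \<sigma> l = real p * dlt"
  by (simp add: urn_Lambda_def urn_psi_def psi_def dlt_def)

lemma kappa_eq: "urn_kappa p \<sigma> l w0 b0 = real p powr (real p * dlt) * (\<Prod>r<p. Gamma (ar r + dlt) / Gamma (ar r))"
  by (simp add: urn_kappa_def urn_Lambda_def urn_psi_def psi_def dlt_def ar_def c0_def add.commute add.left_commute)

lemma kappa_pos: "urn_kappa p \<sigma> l w0 b0 > 0"
  unfolding kappa_eq using p1 ar_pos dlt_pos
  by (intro mult_pos_pos prod_pos divide_pos_pos Gamma_pos) (auto intro: add_pos_pos)

lemma G_lim: "(\<lambda>n. g (n * p) * real (n * p) powr urn_Lambda p \<sigma> l) \<longlonglongrightarrow> urn_kappa p \<sigma> l w0 b0"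
proof -
  have "(\<lambda>n. \<Prod>r<p. pochhammer (ar r) n / pochhammer (ar r + dlt) n * real n powr dlt) \<longlonglongrightarrow> (\<Prod>r<p. Gamma (ar r + dlt) / Gamma (ar r))"
    by (intro tendsto_prod poch_ratio_lim ar_pos dlt_pos)
  then have "(\<lambda>n. real p powr (real p * dlt) * (\<Prod>r<p. pochhammer (ar r) n / pochhammer (ar r + dlt) n * real n powr dlt)) \<longlonglongrightarrow> urn_kappa p \<sigma> l w0 b0"
    unfolding kappa_eq by (rule tendsto_mult_left)
  moreover have "real p powr (real p * dlt) * (\<Prod>r<p. pochhammer (ar r) n / pochhammer (ar r + dlt) n * real n powr dlt)
      = g (n * p) * real (n * p) powr urn_Lambda p \<sigma> l" for n
  proof -
    have "(\<Prod>r<p. pochhammer (ar r) n / pochhammer (ar r + dlt) n * real n powr dlt)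
       = g (n * p) * (real n powr dlt) ^ p"
      by (subst prod.distrib) (simp add: g_block)
    also have "(real n powr dlt) ^ p = real n powr (real p * dlt)"
    proof (cases "n = 0")
      case True then show ?thesis using p1 dlt_pos by simp
    next
      case False
      then have "(real n powr dlt) ^ p = (real n powr dlt) powr real p" by (simp add: powr_realpow)
      also have "\<dots> = real n powr (real p * dlt)" by (simp add: powr_powr mult.commute)
      finally show ?thesis .
    qed
    finally show ?thesis unfolding Lambda_eq by (simp add: powr_mult ac_simps)
  qed
  ultimately show ?thesis by simp
qed

end

context urn begin

abbreviation Lam where "Lam \<equiv> urn_Lambda p \<sigma> l"
abbreviation kap where "kap \<equiv> urn_kappa p \<sigma> l w0 b0"

lemma Lam_pos: "Lam > 0" using p1 dlt_pos by (simp add: Lambda_eq)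

lemma g_Suc: "g (Suc n) = g n * (T n / (T n + \<sigma>))"
  by (simp add: urn_g_def)

lemma g_pos: "g n > 0"
  unfolding urn_g_def using T_pos sp by (intro prod_pos) (auto intro: divide_pos_pos add_pos_pos)

lemma g_dec: "decseq g"
proof (rule decseq_SucI)
  fix n
  have "T n / (T n + \<sigma>) \<le> 1" using T_pos[of n] sp by simp
  from mult_left_le[OF this less_imp_le[OF g_pos[of n]]]
  show "g (Suc n) \<le> g n" unfolding g_Suc .
qed

lemma div_lim: "filterlim (\<lambda>N. N div p) sequentially sequentially"
  unfolding filterlim_at_top eventually_sequentially
proof
  fix Z show "\<exists>N0. \<forall>N\<ge>N0. Z \<le> N div p"
    using p1 by (intro exI[of _ "Z * p"]) (auto simp: less_eq_div_iff_mult_less_eq)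
qed

lemma part3: "(\<lambda>N. g N * real N powr Lam) \<longlonglongrightarrow> kap"
proof -
  define G where "G n = g (n * p) * real (n * p) powr Lam" for n
  have GL: "G \<longlonglongrightarrow> kap" unfolding G_def by (rule G_lim)
  define lo where "lo n = G (Suc n) * (real n / real (Suc n)) powr Lam" for n
  define hi where "hi n = G n * (real (Suc n) / real n) powr Lam" for n
  have loL: "lo \<longlonglongrightarrow> kap"
  proof -
    have "(\<lambda>n. G (Suc n) * (real n / real (Suc n)) powr Lam) \<longlonglongrightarrow> kap * 1 powr Lam"
      by (intro tendsto_mult tendsto_powr LIMSEQ_n_over_Suc_n tendsto_const) (use GL LIMSEQ_Suc in auto)
    then show ?thesis unfolding lo_def by simp
  qed
  have hiL: "hi \<longlonglongrightarrow> kap"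
  proof -
    have "(\<lambda>n. G n * (real (Suc n) / real n) powr Lam) \<longlonglongrightarrow> kap * 1 powr Lam"
      by (intro tendsto_mult tendsto_powr LIMSEQ_Suc_n_over_n tendsto_const GL) auto
    then show ?thesis unfolding hi_def by simp
  qed
  have b: "lo (N div p) \<le> g N * real N powr Lam \<and> g N * real N powr Lam \<le> hi (N div p)" if "N \<ge> p" for N
  proof -
    define n where "n = N div p"
    have n1: "n \<ge> 1" using that p1 by (simp add: n_def less_eq_div_iff_mult_less_eq)
    have le1: "n * p \<le> N" by (simp add: n_def)
    have m: "N mod p < p" using p1 by simp
    have "N = n * p + N mod p" by (simp add: n_def)
    then have le2: "N \<le> Suc n * p" using m by simp
    have lo_eq: "lo n = g (Suc n * p) * real (n * p) powr Lam"
    proof -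
      have "real (Suc n * p) powr Lam * (real n / real (Suc n)) powr Lam = (real (Suc n * p) * (real n / real (Suc n))) powr Lam"
        by (rule powr_mult[symmetric]; simp)
      also have "real (Suc n * p) * (real n / real (Suc n)) = real (n * p)"
        by (simp add: field_simps)
      finally show ?thesis unfolding lo_def G_def by (simp add: mult.assoc)
    qed
    have hi_eq: "hi n = g (n * p) * real (Suc n * p) powr Lam"
    proof -
      have "real (n * p) powr Lam * (real (Suc n) / real n) powr Lam = (real (n * p) * (real (Suc n) / real n)) powr Lam"
        by (rule powr_mult[symmetric]; simp)
      also have "real (n * p) * (real (Suc n) / real n) = real (Suc n * p)"
        using n1 by (simp add: field_simps)
      finally show ?thesis unfolding hi_def G_def by (simp add: mult.assoc)
    qed
    have "g (Suc n * p) * real (n * p) powr Lam \<le> g N * real N powr Lam"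
      using of_nat_mono[OF le1, where 'a=real] Lam_pos g_pos[of "Suc n * p"] decseqD[OF g_dec le2]
      by (intro mult_mono powr_mono2) (simp_all only: of_nat_0_le_iff less_imp_le powr_ge_zero)
    moreover have "g N * real N powr Lam \<le> g (n * p) * real (Suc n * p) powr Lam"
      using of_nat_mono[OF le2, where 'a=real] Lam_pos g_pos[of N] decseqD[OF g_dec le1]
      by (intro mult_mono powr_mono2) (simp_all only: of_nat_0_le_iff less_imp_le powr_ge_zero)
    ultimately show ?thesis using lo_eq hi_eq n_def by simp
  qed
  show ?thesis
  proof (rule tendsto_sandwich)
    show "eventually (\<lambda>N. lo (N div p) \<le> g N * real N powr Lam) sequentially"
      using b by (auto simp: eventually_sequentially)
    show "eventually (\<lambda>N. g N * real N powr Lam \<le> hi (N div p)) sequentially"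
      using b by (auto simp: eventually_sequentially)
    show "(\<lambda>N. lo (N div p)) \<longlonglongrightarrow> kap" by (rule filterlim_compose[OF loL div_lim])
    show "(\<lambda>N. hi (N div p)) \<longlonglongrightarrow> kap" by (rule filterlim_compose[OF hiL div_lim])
  qed
qed

end

context urn begin

abbreviation Mg where "Mg N \<omega> \<equiv> g N * W N \<omega>"

abbreviation v where "v k \<equiv> w0 + real k * \<sigma>"

lemma W_eq_iff: "W n \<omega> = v k0 \<Longrightarrow> (W n \<omega> = v k) \<longleftrightarrow> k = k0"
  using sp by auto

lemma pair_repr:
  fixes H :: "real \<Rightarrow> real \<Rightarrow> real"
  shows "H (W a \<omega>) (W b \<omega>) = (\<Sum>i\<le>a. \<Sum>j\<le>b. H (v i) (v j) * ((if W a \<omega> = v i then 1 else 0) * (if W b \<omega> = v j then 1 else 0)))"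
proof -
  obtain i0 where i0: "i0 \<le> a" "W a \<omega> = v i0" using W_range by blast
  obtain j0 where j0: "j0 \<le> b" "W b \<omega> = v j0" using W_range by blast
  have mi: "x * (if P then 1 else 0) = (if P then x else 0)" for x :: real and P by simp
  have "(\<Sum>i\<le>a. \<Sum>j\<le>b. H (v i) (v j) * ((if W a \<omega> = v i then 1 else 0) * (if W b \<omega> = v j then 1 else 0)))
    = (\<Sum>i\<le>a. \<Sum>j\<le>b. ((H (v i) (v j) * (if i = i0 then 1 else 0)) * (if j = j0 then 1 else 0)))"
    using W_eq_iff[OF i0(2)] W_eq_iff[OF j0(2)] by (simp add: mult.assoc)
  also have "\<dots> = H (W a \<omega>) (W b \<omega>)" using i0 j0 by (simp only: mi sum.delta finite_atMost) simp
  finally show ?thesis by simp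
qed

lemma pair_meas:
  fixes H :: "real \<Rightarrow> real \<Rightarrow> real"
  shows "(\<lambda>\<omega>. H (W a \<omega>) (W b \<omega>)) \<in> borel_measurable M"
proof -
  have "(\<lambda>\<omega>. (\<Sum>i\<le>a. \<Sum>j\<le>b. H (v i) (v j) * ((if W a \<omega> = v i then 1 else 0) * (if W b \<omega> = v j then 1 else 0)))) \<in> borel_measurable M"
    using hW_meas[of "\<lambda>y. if y = v _ then 1 else 0" a] hW_meas[of "\<lambda>y. if y = v _ then 1 else 0" b]
    by (intro borel_measurable_sum borel_measurable_times) auto
  then show ?thesis by (subst pair_repr) simp
qed

lemma pair_int:
  fixes H :: "real \<Rightarrow> real \<Rightarrow> real"
  shows "integrable M (\<lambda>\<omega>. H (W a \<omega>) (W b \<omega>))"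
proof (rule int_bounded[OF pair_meas])
  fix \<omega>
  obtain i0 where i0: "i0 \<le> a" "W a \<omega> = v i0" using W_range by blast
  obtain j0 where j0: "j0 \<le> b" "W b \<omega> = v j0" using W_range by blast
  have "\<bar>H (v i0) (v j0)\<bar> \<le> (\<Sum>j\<le>b. \<bar>H (v i0) (v j)\<bar>)"
    by (rule member_le_sum[of j0 "{..b}" "\<lambda>j. \<bar>H (v i0) (v j)\<bar>"]) (use j0 in auto)
  also have "\<dots> \<le> (\<Sum>i\<le>a. \<Sum>j\<le>b. \<bar>H (v i) (v j)\<bar>)"
    by (rule member_le_sum[of i0 "{..a}" "\<lambda>i. \<Sum>j\<le>b. \<bar>H (v i) (v j)\<bar>"]) (use i0 in \<open>auto intro: sum_nonneg\<close>)
  finally show "\<bar>H (W a \<omega>) (W b \<omega>)\<bar> \<le> (\<Sum>i\<le>a. \<Sum>j\<le>b. \<bar>H (v i) (v j)\<bar>)" using i0 j0 by simp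
qed

lemma Mg_nonneg: "Mg N \<omega> \<ge> 0"
  using g_pos[of N] W_ge[of N \<omega>] w0p by simp

lemma Mg_measF: "(\<lambda>\<omega>. Mg N \<omega>) \<in> borel_measurable (F N)"
  using hW_measF[of N N "\<lambda>y. g N * y"] by simp

lemma Mg_int: "integrable M (\<lambda>\<omega>. Mg N \<omega>)"
  using hW_int[of "\<lambda>y. g N * y" N] by simp

lemma ratio_one: "T n / (T n + \<sigma>) * ((T n + \<sigma>) / T n) = 1"
proof -
  have "T n \<noteq> 0" "T n + \<sigma> \<noteq> 0" using T_pos[of n] sp by auto
  then show ?thesis by simp
qed

lemma g_Suc_ratio: "g (Suc n) * ((T n + \<sigma>) / T n) = g n"
  by (simp only: g_Suc mult.assoc ratio_one mult_1_right)

lemma Mg_mart: "AE \<omega> in M. real_cond_exp M (F N) (\<lambda>\<omega>. Mg (Suc N) \<omega>) \<omega> = Mg N \<omega>"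
proof -
  interpret S: finite_measure_subalgebra M "F N"
    using fin subalg by (simp add: finite_measure_subalgebra_def finite_measure_subalgebra_axioms_def)
  show ?thesis
  proof (rule S.real_cond_exp_charact)
    fix A assume A: "A \<in> sets (F N)"
    have Am: "indicator A \<in> borel_measurable (F N)" using A by simp
    have Ab: "\<bar>indicator A \<omega> :: real\<bar> \<le> 1" for \<omega> by (simp add: indicator_def)
    have "(\<integral>\<omega>\<in>A. Mg (Suc N) \<omega> \<partial>M) = (\<integral>\<omega>. g (Suc N) * (indicator A \<omega> * W (Suc N) \<omega>) \<partial>M)"
      unfolding set_lebesgue_integral_def by (intro Bochner_Integration.integral_cong) (simp_all del: urnW.simps)
    also have "\<dots> = g (Suc N) * (\<integral>\<omega>. indicator A \<omega> * W (Suc N) \<omega> \<partial>M)"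
      by (rule integral_mult_right_zero)
    also have "\<dots> = g (Suc N) * ((T N + \<sigma>) / T N) * (\<integral>\<omega>. indicator A \<omega> * W N \<omega> \<partial>M)"
      using K2[OF Am Ab] by simp
    also have "g (Suc N) * ((T N + \<sigma>) / T N) = g N" by (rule g_Suc_ratio)
    also have "g N * (\<integral>\<omega>. indicator A \<omega> * W N \<omega> \<partial>M) = (\<integral>\<omega>\<in>A. Mg N \<omega> \<partial>M)"
      unfolding set_lebesgue_integral_def integral_mult_right_zero[symmetric] by (simp add: ac_simps)
    finally show "(\<integral>\<omega>\<in>A. Mg (Suc N) \<omega> \<partial>M) = (\<integral>\<omega>\<in>A. Mg N \<omega> \<partial>M)" .
  qed (rule Mg_int, rule Mg_int, rule Mg_measF)
qed

lemma cross: "a \<le> b \<Longrightarrow> (\<integral>\<omega>. Mg a \<omega> * Mg b \<omega> \<partial>M) = (\<integral>\<omega>. Mg a \<omega> * Mg a \<omega> \<partial>M)"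
proof (induction b rule: dec_induct)
  case base then show ?case by simp
next
  case (step b)
  have fm: "(\<lambda>\<omega>. Mg a \<omega>) \<in> borel_measurable (F b)"
    using hW_measF[of a b "\<lambda>y. g a * y"] step by simp
  have fb: "\<bar>Mg a \<omega>\<bar> \<le> (\<Sum>k\<le>a. \<bar>g a * v k\<bar>)" for \<omega>
    using hW_bound[of "\<lambda>y. g a * y" a \<omega>] by simp
  have "(\<integral>\<omega>. Mg a \<omega> * Mg (Suc b) \<omega> \<partial>M) = (\<integral>\<omega>. g (Suc b) * (Mg a \<omega> * W (Suc b) \<omega>) \<partial>M)"
    by (intro Bochner_Integration.integral_cong) (simp_all del: urnW.simps)
  also have "\<dots> = g (Suc b) * (\<integral>\<omega>. Mg a \<omega> * W (Suc b) \<omega> \<partial>M)"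
    by (rule integral_mult_right_zero)
  also have "\<dots> = g (Suc b) * ((T b + \<sigma>) / T b) * (\<integral>\<omega>. Mg a \<omega> * W b \<omega> \<partial>M)"
    using K2[OF fm fb] by simp
  also have "g (Suc b) * ((T b + \<sigma>) / T b) = g b" by (rule g_Suc_ratio)
  also have "g b * (\<integral>\<omega>. Mg a \<omega> * W b \<omega> \<partial>M) = (\<integral>\<omega>. Mg a \<omega> * Mg b \<omega> \<partial>M)"
    unfolding integral_mult_right_zero[symmetric] by (simp add: ac_simps)
  finally show ?case using step by simp
qed

definition cw where "cw = w0 / \<sigma>"

definition R where "R N = g N ^ 2 * (\<Prod>j<N. (T j + 2 * \<sigma>) / T j)"

lemma gQ: "g N * (\<Prod>j<N. (T j + \<sigma>) / T j) = 1"
proof -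
  have "g N * (\<Prod>j<N. (T j + \<sigma>) / T j) = (\<Prod>j<N. T j / (T j + \<sigma>) * ((T j + \<sigma>) / T j))"
    by (simp only: urn_g_def prod.distrib)
  also have "\<dots> = 1" by (rule prod.neutral) (use ratio_one in blast)
  finally show ?thesis .
qed

lemma R_nonneg: "R N \<ge> 0"
  unfolding R_def using T_pos sp
  by (intro mult_nonneg_nonneg prod_nonneg) (auto intro!: divide_nonneg_pos add_nonneg_nonneg less_imp_le divide_pos_pos add_pos_pos)

lemma R_dec: "decseq R"
proof (rule decseq_SucI)
  fix N
  have Tp: "T N > 0" using T_pos .
  have "R (Suc N) = R N * ((T N / (T N + \<sigma>)) ^ 2 * ((T N + 2 * \<sigma>) / T N))"
    by (simp only: R_def g_Suc prod.lessThan_Suc power_mult_distrib mult_ac)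
  also have "(T N / (T N + \<sigma>)) ^ 2 * ((T N + 2 * \<sigma>) / T N) \<le> 1"
  proof -
    have nz: "T N \<noteq> 0" "T N + \<sigma> \<noteq> 0" "T N + \<sigma> > 0" using Tp sp by auto
    have "(T N / (T N + \<sigma>)) ^ 2 * ((T N + 2 * \<sigma>) / T N) = (T N ^ 2 * (T N + 2 * \<sigma>)) / ((T N + \<sigma>)^2 * T N)"
      by (simp add: power_divide)
    also have "\<dots> \<le> 1"
    proof -
      have "(T N + \<sigma>)^2 * T N - T N ^ 2 * (T N + 2 * \<sigma>) = \<sigma>^2 * T N" by (simp add: power2_eq_square algebra_simps)
      moreover have "0 \<le> \<sigma>^2 * T N" using Tp by simp
      ultimately have "T N ^ 2 * (T N + 2 * \<sigma>) \<le> (T N + \<sigma>)^2 * T N" by linarith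
      moreover have "(T N + \<sigma>)^2 * T N > 0" using nz Tp by simp
      ultimately show ?thesis by (simp add: pos_divide_le_eq)
    qed
    finally show ?thesis .
  qed
  then have "R N * ((T N / (T N + \<sigma>)) ^ 2 * ((T N + 2 * \<sigma>) / T N)) \<le> R N * 1"
    by (intro mult_left_mono) (use R_nonneg in auto)
  finally show "R (Suc N) \<le> R N" by simp
qed

lemma second: "(\<integral>\<omega>. Mg N \<omega> * Mg N \<omega> \<partial>M) = \<sigma>^2 * (cw * (cw + 1) * R N - cw * g N)"
proof -
  have pt: "Mg N \<omega> * Mg N \<omega> = (g N)^2 * \<sigma>^2 * (pochhammer (W N \<omega> / \<sigma>) 2 - pochhammer (W N \<omega> / \<sigma>) 1)" for \<omega>
    using sp by (simp add: pochhammer_Suc numeral_eq_Suc power2_eq_square field_simps)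
  have "(\<integral>\<omega>. Mg N \<omega> * Mg N \<omega> \<partial>M) = (g N)^2 * \<sigma>^2 * ((\<integral>\<omega>. pochhammer (W N \<omega> / \<sigma>) 2 \<partial>M) - (\<integral>\<omega>. pochhammer (W N \<omega> / \<sigma>) 1 \<partial>M))"
    unfolding pt using hW_int[of "\<lambda>y. pochhammer (y / \<sigma>) 2" N] hW_int[of "\<lambda>y. pochhammer (y / \<sigma>) 1" N]
    by simp
  also have "\<dots> = (g N)^2 * \<sigma>^2 * (cw * (cw + 1) * (\<Prod>j<N. (T j + 2 * \<sigma>) / T j) - cw * (\<Prod>j<N. (T j + \<sigma>) / T j))"
    unfolding part1 cw_def by (simp add: pochhammer_Suc numeral_eq_Suc)
  also have "\<dots> = \<sigma>^2 * (cw * (cw + 1) * R N - cw * (g N * (g N * (\<Prod>j<N. (T j + \<sigma>) / T j))))"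
    unfolding R_def by (simp add: algebra_simps power2_eq_square)
  also have "g N * (g N * (\<Prod>j<N. (T j + \<sigma>) / T j)) = g N" using gQ by simp
  finally show ?thesis .
qed

lemma D2: assumes "a \<le> b"
  shows "(\<integral>\<omega>. (Mg b \<omega> - Mg a \<omega>)^2 \<partial>M) \<le> \<sigma>^2 * cw * g a"
proof -
  have "(\<integral>\<omega>. (Mg b \<omega> - Mg a \<omega>)^2 \<partial>M) = (\<integral>\<omega>. Mg b \<omega> * Mg b \<omega> - 2 * (Mg a \<omega> * Mg b \<omega>) + Mg a \<omega> * Mg a \<omega> \<partial>M)"
    by (simp add: power2_eq_square algebra_simps)
  also have "\<dots> = (\<integral>\<omega>. Mg b \<omega> * Mg b \<omega> \<partial>M) - 2 * (\<integral>\<omega>. Mg a \<omega> * Mg b \<omega> \<partial>M) + (\<integral>\<omega>. Mg a \<omega> * Mg a \<omega> \<partial>M)"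
    using pair_int[of "\<lambda>x y. g b * y * (g b * y)" a b] pair_int[of "\<lambda>x y. g a * x * (g b * y)" a b]
      pair_int[of "\<lambda>x y. g a * x * (g a * x)" a b]
    by simp
  also have "\<dots> = (\<integral>\<omega>. Mg b \<omega> * Mg b \<omega> \<partial>M) - (\<integral>\<omega>. Mg a \<omega> * Mg a \<omega> \<partial>M)"
    using cross[OF assms] by simp
  also have "\<dots> = \<sigma>^2 * cw * (cw + 1) * (R b - R a) + \<sigma>^2 * cw * (g a - g b)"
    unfolding second by (simp add: algebra_simps)
  also have "\<dots> \<le> \<sigma>^2 * cw * g a"
  proof -
    have cw: "cw > 0" using sp w0p by (simp add: cw_def)
    have "\<sigma>^2 * cw * (cw + 1) * (R b - R a) \<le> 0"
      using decseqD[OF R_dec assms] cw by (intro mult_nonneg_nonpos) auto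
    moreover have "\<sigma>^2 * cw * (g a - g b) \<le> \<sigma>^2 * cw * g a"
      using g_pos[of b] cw by (intro mult_left_mono) auto
    ultimately show ?thesis by linarith
  qed
  finally show ?thesis .
qed

lemma D1: assumes "a \<le> b"
  shows "(\<integral>\<omega>. \<bar>Mg b \<omega> - Mg a \<omega>\<bar> \<partial>M) \<le> (\<sigma> * w0 + 1) * sqrt (g a)"
proof -
  define s where "s = sqrt (g a)"
  have s: "s > 0" using g_pos by (simp add: s_def)
  have pt: "\<bar>x\<bar> \<le> (x^2 / s + s) / 2" for x :: real
  proof -
    have "0 \<le> (\<bar>x\<bar> - s)^2" by simp
    then have "2 * s * \<bar>x\<bar> \<le> x^2 + s^2" by (simp add: power2_eq_square algebra_simps)
    then show ?thesis using s by (simp add: field_simps power2_eq_square)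
  qed
  have i1: "integrable M (\<lambda>\<omega>. \<bar>Mg b \<omega> - Mg a \<omega>\<bar>)"
    using pair_int[of "\<lambda>x y. \<bar>g b * y - g a * x\<bar>" a b] by simp
  have i2: "integrable M (\<lambda>\<omega>. ((Mg b \<omega> - Mg a \<omega>)^2 / s + s) / 2)"
    using pair_int[of "\<lambda>x y. ((g b * y - g a * x)^2 / s + s) / 2" a b] by simp
  have "(\<integral>\<omega>. \<bar>Mg b \<omega> - Mg a \<omega>\<bar> \<partial>M) \<le> (\<integral>\<omega>. ((Mg b \<omega> - Mg a \<omega>)^2 / s + s) / 2 \<partial>M)"
    by (rule integral_mono[OF i1 i2]) (rule pt)
  also have "\<dots> = ((\<integral>\<omega>. (Mg b \<omega> - Mg a \<omega>)^2 \<partial>M) / s + s) / 2"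
  proof -
    have i3: "integrable M (\<lambda>\<omega>. (Mg b \<omega> - Mg a \<omega>)^2 / s)"
      using pair_int[of "\<lambda>x y. (g b * y - g a * x)^2 / s" a b] by simp
    have "(\<integral>\<omega>. ((Mg b \<omega> - Mg a \<omega>)^2 / s + s) / 2 \<partial>M) = (\<integral>\<omega>. (Mg b \<omega> - Mg a \<omega>)^2 / s + s \<partial>M) / 2"
      by (rule integral_divide_zero)
    also have "(\<integral>\<omega>. (Mg b \<omega> - Mg a \<omega>)^2 / s + s \<partial>M) = (\<integral>\<omega>. (Mg b \<omega> - Mg a \<omega>)^2 / s \<partial>M) + (\<integral>\<omega>. s \<partial>M)"
      by (rule Bochner_Integration.integral_add[OF i3 finite_measure.integrable_const[OF fin]])
    also have "(\<integral>\<omega>. s \<partial>M) = s" using ps by (simp add: prob_space.prob_space)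
    also have "(\<integral>\<omega>. (Mg b \<omega> - Mg a \<omega>)^2 / s \<partial>M) = (\<integral>\<omega>. (Mg b \<omega> - Mg a \<omega>)^2 \<partial>M) / s"
      by (rule integral_divide_zero)
    finally show ?thesis .
  qed
  also have "\<dots> \<le> ((\<sigma>^2 * cw * g a) / s + s) / 2"
    using D2[OF assms] s by (simp add: divide_right_mono)
  also have "(\<sigma>^2 * cw * g a) / s = \<sigma> * w0 * s"
    using s sp g_pos[of a] by (simp add: s_def cw_def field_simps power2_eq_square)
  also have "(\<sigma> * w0 * s + s) / 2 \<le> (\<sigma> * w0 + 1) * s" using s sp w0p by (simp add: field_simps)
  finally show ?thesis by (simp add: s_def)
qed

end

lemma interp:
  fixes f lo hi :: "nat \<Rightarrow> real" and a :: "nat \<Rightarrow> nat"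
  assumes a: "strict_mono a"
    and bnd: "\<And>k N. a k \<le> N \<Longrightarrow> N \<le> a (Suc k) \<Longrightarrow> lo k \<le> f N \<and> f N \<le> hi k"
    and lo: "lo \<longlonglongrightarrow> L" and hi: "hi \<longlonglongrightarrow> L"
  shows "f \<longlonglongrightarrow> L"
proof -
  define kk where "kk N = (LEAST k. N < a (Suc k))" for N
  have ex: "N < a (Suc N)" for N
    using seq_suble[OF a, of "Suc N"] by simp
  have kk1: "N < a (Suc (kk N))" for N
    unfolding kk_def by (rule LeastI[of _ N]) (rule ex)
  have kk2: "a (kk N) \<le> N" if "a 0 \<le> N" for N
  proof (cases "kk N")
    case 0 then show ?thesis using that by simp
  next
    case (Suc j)
    have "\<not> N < a (Suc j)"
      using not_less_Least[of j "\<lambda>k. N < a (Suc k)"] Suc unfolding kk_def by simp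
    then show ?thesis using Suc by simp
  qed
  have kklim: "filterlim kk sequentially sequentially"
    unfolding filterlim_at_top eventually_sequentially
  proof
    fix Z
    show "\<exists>N0. \<forall>N\<ge>N0. Z \<le> kk N"
    proof (intro exI allI impI)
      fix N assume "a Z \<le> N"
      show "Z \<le> kk N"
      proof (rule ccontr)
        assume "\<not> Z \<le> kk N"
        then have "Suc (kk N) \<le> Z" by simp
        then have "a (Suc (kk N)) \<le> a Z" using a by (simp add: strict_mono_less_eq)
        with kk1[of N] \<open>a Z \<le> N\<close> show False by simp
      qed
    qed
  qed
  show ?thesis
  proof (rule tendsto_sandwich)
    show "eventually (\<lambda>N. lo (kk N) \<le> f N) sequentially"
      unfolding eventually_sequentially using bnd kk2 kk1 by (meson less_imp_le)
    show "eventually (\<lambda>N. f N \<le> hi (kk N)) sequentially"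
      unfolding eventually_sequentially using bnd kk2 kk1 by (meson less_imp_le)
    show "(\<lambda>N. lo (kk N)) \<longlonglongrightarrow> L" by (rule filterlim_compose[OF lo kklim])
    show "(\<lambda>N. hi (kk N)) \<longlonglongrightarrow> L" by (rule filterlim_compose[OF hi kklim])
  qed
qed

context urn begin

definition qq where "qq = nat \<lceil>4 / Lam\<rceil> + 1"
definition aa :: "nat \<Rightarrow> nat" where "aa k = k ^ qq"

lemma qq_pos: "qq \<ge> 1" by (simp add: qq_def)

lemma qq_Lam: "real qq * Lam \<ge> 4"
proof -
  have "4 / Lam \<le> real (nat \<lceil>4 / Lam\<rceil>)" by (rule real_nat_ceiling_ge)
  then have "4 / Lam \<le> real qq" unfolding qq_def by simp
  then have "4 \<le> real qq * Lam" using Lam_pos by (simp add: pos_divide_le_eq)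
  then show ?thesis by simp
qed

lemma aa_mono: "strict_mono aa"
proof (rule strict_monoI)
  fix x y :: nat assume "x < y"
  then show "aa x < aa y" using power_strict_mono[of x y qq] qq_pos by (simp add: aa_def)
qed

lemma W_inc: "incseq (\<lambda>N. W N \<omega>)"
  using sp by (intro incseq_SucI) simp

lemma ratio_lim: "(\<lambda>k. g (aa (Suc k)) / g (aa k)) \<longlonglongrightarrow> 1"
proof -
  define G where "G k = g (aa k) * real (aa k) powr Lam" for k
  have GL: "G \<longlonglongrightarrow> kap"
    using LIMSEQ_subseq_LIMSEQ[OF part3 aa_mono] unfolding G_def comp_def .
  have GL': "(\<lambda>k. G (Suc k)) \<longlonglongrightarrow> kap" using GL by (rule LIMSEQ_Suc)
  have pl: "(\<lambda>k. ((real k / real (Suc k)) ^ qq) powr Lam) \<longlonglongrightarrow> (1 ^ qq) powr Lam"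
    by (intro tendsto_powr tendsto_power LIMSEQ_n_over_Suc_n tendsto_const) simp
  have "(\<lambda>k. G (Suc k) / G k * ((real k / real (Suc k)) ^ qq) powr Lam) \<longlonglongrightarrow> kap / kap * (1 ^ qq) powr Lam"
    by (intro tendsto_mult tendsto_divide GL GL' pl) (use kappa_pos in simp)
  then have lim: "(\<lambda>k. G (Suc k) / G k * ((real k / real (Suc k)) ^ qq) powr Lam) \<longlonglongrightarrow> 1"
    using kappa_pos by simp
  have "eventually (\<lambda>k. G (Suc k) / G k * ((real k / real (Suc k)) ^ qq) powr Lam = g (aa (Suc k)) / g (aa k)) sequentially"
    using eventually_gt_at_top[of 0]
  proof eventually_elim
    case (elim k)
    have p1: "real (aa k) > 0" "real (aa (Suc k)) > 0" using elim by (simp_all add: aa_def)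
    have e: "((real k / real (Suc k)) ^ qq) powr Lam = real (aa k) powr Lam / real (aa (Suc k)) powr Lam"
      by (simp add: aa_def power_divide powr_divide)
    show ?case unfolding e G_def using p1 g_pos[of "aa k"] g_pos[of "aa (Suc k)"]
      by (simp add: field_simps)
  qed
  from tendsto_cong[OF this] lim show ?thesis by simp
qed

lemma sqrt_summable: "summable (\<lambda>k. sqrt (g (aa k)))"
proof -
  have ev: "eventually (\<lambda>N. g N * real N powr Lam < 2 * kap) sequentially"
    using part3 kappa_pos by (intro order_tendstoD(2)) auto
  have ev2: "eventually (\<lambda>k. g (aa k) * real (aa k) powr Lam < 2 * kap) sequentially"
    using ev filterlim_subseq[OF aa_mono] unfolding filterlim_iff by blast
  have "eventually (\<lambda>k. norm (sqrt (g (aa k))) \<le> sqrt (2 * kap) * inverse (real k ^ 2)) sequentially"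
    using ev2 eventually_gt_at_top[of 0]
  proof eventually_elim
    case (elim k)
    have k1: "real k \<ge> 1" using elim by simp
    have "real (aa k) powr Lam = real k powr (real qq * Lam)"
      using elim by (simp add: aa_def powr_realpow[symmetric] powr_powr)
    also have "\<dots> \<ge> real k powr 4" using qq_Lam k1 by (intro powr_mono) auto
    finally have pk: "real (aa k) powr Lam \<ge> real k ^ 4" using elim by (simp add: powr_realpow)
    have k4: "real k ^ 4 > 0" using elim by simp
    have "g (aa k) * real k ^ 4 \<le> g (aa k) * real (aa k) powr Lam"
      using pk g_pos[of "aa k"] by (intro mult_left_mono) auto
    then have "g (aa k) * real k ^ 4 < 2 * kap" using elim by simp
    then have "g (aa k) \<le> 2 * kap / real k ^ 4" using k4 by (simp add: field_simps)
    then have "sqrt (g (aa k)) \<le> sqrt (2 * kap / real k ^ 4)" by simp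
    also have "sqrt (2 * kap / real k ^ 4) = sqrt (2 * kap) * inverse (real k ^ 2)"
    proof -
      have "sqrt (real k ^ 4) = real k ^ 2" by (rule real_sqrt_unique) simp_all
      then show ?thesis by (simp add: divide_inverse real_sqrt_mult real_sqrt_inverse)
    qed
    finally show ?case using g_pos[of "aa k"] by simp
  qed
  moreover have "summable (\<lambda>k. sqrt (2 * kap) * inverse (real k ^ 2))"
    by (intro summable_mult inverse_power_summable) simp
  ultimately show ?thesis by (rule summable_comparison_test_ev)
qed

end

context urn begin

lemma D_meas: "(\<lambda>\<omega>. \<bar>Mg (aa (Suc k)) \<omega> - Mg (aa k) \<omega>\<bar>) \<in> borel_measurable M"
  using pair_meas[of "\<lambda>x y. \<bar>g (aa (Suc k)) * y - g (aa k) * x\<bar>" "aa k" "aa (Suc k)"] by simp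

lemma ae_summable: "AE \<omega> in M. summable (\<lambda>k. \<bar>Mg (aa (Suc k)) \<omega> - Mg (aa k) \<omega>\<bar>)"
proof -
  define D where "D k \<omega> = \<bar>Mg (aa (Suc k)) \<omega> - Mg (aa k) \<omega>\<bar>" for k \<omega>
  define B where "B k = (\<sigma> * w0 + 1) * sqrt (g (aa k))" for k
  have Dm: "D k \<in> borel_measurable M" for k unfolding D_def by (rule D_meas)
  have Di: "integrable M (D k)" for k
    unfolding D_def using pair_int[of "\<lambda>x y. \<bar>g (aa (Suc k)) * y - g (aa k) * x\<bar>" "aa k" "aa (Suc k)"] by simp
  have DB: "(\<integral>\<omega>. D k \<omega> \<partial>M) \<le> B k" for k
    unfolding D_def B_def by (rule D1) (use aa_mono in \<open>simp add: strict_mono_less_eq\<close>)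
  have Bs: "summable B" unfolding B_def by (intro summable_mult sqrt_summable)
  have B0: "B k \<ge> 0" for k unfolding B_def using sp w0p g_pos[of "aa k"] by simp
  have "(\<integral>\<^sup>+ \<omega>. (\<Sum>k. ennreal (D k \<omega>)) \<partial>M) = (\<Sum>k. \<integral>\<^sup>+ \<omega>. ennreal (D k \<omega>) \<partial>M)"
    by (rule nn_integral_suminf) (use Dm in measurable)
  also have "\<dots> = (\<Sum>k. ennreal (\<integral>\<omega>. D k \<omega> \<partial>M))"
    by (intro suminf_cong nn_integral_eq_integral Di) (simp add: D_def)
  also have "\<dots> \<le> (\<Sum>k. ennreal (B k))"
    by (intro suminf_le summableI ennreal_leI DB)
  also have "\<dots> = ennreal (\<Sum>k. B k)" by (rule suminf_ennreal2[OF B0 Bs])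
  finally have le: "(\<integral>\<^sup>+ \<omega>. (\<Sum>k. ennreal (D k \<omega>)) \<partial>M) \<le> ennreal (\<Sum>k. B k)" .
  have "(\<integral>\<^sup>+ \<omega>. (\<Sum>k. ennreal (D k \<omega>)) \<partial>M) < top"
    using le ennreal_less_top by (rule le_less_trans)
  then have "(\<integral>\<^sup>+ \<omega>. (\<Sum>k. ennreal (D k \<omega>)) \<partial>M) \<noteq> \<infinity>" by simp
  then have "AE \<omega> in M. (\<Sum>k. ennreal (D k \<omega>)) \<noteq> \<infinity>"
    by (intro nn_integral_noteq_infinite) (use Dm in measurable)
  then show ?thesis
  proof (rule AE_mp, intro AE_I2 impI)
    fix \<omega> assume "(\<Sum>k. ennreal (D k \<omega>)) \<noteq> \<infinity>"
    then have "summable (\<lambda>k. D k \<omega>)" by (intro summable_suminf_not_top) (auto simp: D_def)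
    then show "summable (\<lambda>k. \<bar>Mg (aa (Suc k)) \<omega> - Mg (aa k) \<omega>\<bar>)" by (simp add: D_def)
  qed
qed

lemma conv_of_summable:
  assumes "summable (\<lambda>k. \<bar>Mg (aa (Suc k)) \<omega> - Mg (aa k) \<omega>\<bar>)"
  shows "(\<lambda>N. Mg N \<omega>) \<longlonglongrightarrow> lim (\<lambda>k. Mg (aa k) \<omega>)"
proof -
  have s: "summable (\<lambda>k. Mg (aa (Suc k)) \<omega> - Mg (aa k) \<omega>)" using summable_rabs_cancel[OF assms] .
  have "(\<lambda>n. (\<Sum>k<n. Mg (aa (Suc k)) \<omega> - Mg (aa k) \<omega>) + Mg (aa 0) \<omega>) \<longlonglongrightarrow> (\<Sum>k. Mg (aa (Suc k)) \<omega> - Mg (aa k) \<omega>) + Mg (aa 0) \<omega>"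
    by (intro tendsto_add summable_LIMSEQ s tendsto_const)
  then have L: "(\<lambda>n. Mg (aa n) \<omega>) \<longlonglongrightarrow> (\<Sum>k. Mg (aa (Suc k)) \<omega> - Mg (aa k) \<omega>) + Mg (aa 0) \<omega>"
    by (simp add: sum_lessThan_telescope[of "\<lambda>k. Mg (aa k) \<omega>"])
  define Lm where "Lm = lim (\<lambda>k. Mg (aa k) \<omega>)"
  have L': "(\<lambda>n. Mg (aa n) \<omega>) \<longlonglongrightarrow> Lm" unfolding Lm_def using L by (simp add: limI)
  define r where "r k = g (aa (Suc k)) / g (aa k)" for k
  have rL: "r \<longlonglongrightarrow> 1" unfolding r_def by (rule ratio_lim)
  have riL: "(\<lambda>k. inverse (r k)) \<longlonglongrightarrow> inverse 1" by (intro tendsto_inverse rL) simp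
  show ?thesis unfolding Lm_def[symmetric]
  proof (rule interp[OF aa_mono])
    show "(\<lambda>k. r k * Mg (aa k) \<omega>) \<longlonglongrightarrow> Lm" using tendsto_mult[OF rL L'] by simp
    show "(\<lambda>k. inverse (r k) * Mg (aa (Suc k)) \<omega>) \<longlonglongrightarrow> Lm"
      using tendsto_mult[OF riL LIMSEQ_Suc[OF L']] by simp
    fix k N assume k1: "aa k \<le> N" and k2: "N \<le> aa (Suc k)"
    have e1: "r k * Mg (aa k) \<omega> = g (aa (Suc k)) * W (aa k) \<omega>"
      unfolding r_def using g_pos[of "aa k"] by simp
    have e2: "inverse (r k) * Mg (aa (Suc k)) \<omega> = g (aa k) * W (aa (Suc k)) \<omega>"
      unfolding r_def using g_pos[of "aa (Suc k)"] by simp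
    have W0: "W n \<omega> \<ge> 0" for n using W_ge[of n \<omega>] w0p by simp
    have "g (aa (Suc k)) * W (aa k) \<omega> \<le> g N * W N \<omega>"
      using decseqD[OF g_dec k2] incseqD[OF W_inc k1] g_pos[of N] W0[of "aa k"]
      by (intro mult_mono) auto
    moreover have "g N * W N \<omega> \<le> g (aa k) * W (aa (Suc k)) \<omega>"
      using decseqD[OF g_dec k1] incseqD[OF W_inc k2] g_pos[of "aa k"] W0[of N]
      by (intro mult_mono) auto
    ultimately show "r k * Mg (aa k) \<omega> \<le> Mg N \<omega> \<and> Mg N \<omega> \<le> inverse (r k) * Mg (aa (Suc k)) \<omega>"
      unfolding e1 e2 by (rule conjI)
  qed
qed

lemma ae_conv:
  "\<exists>Minf. Minf \<in> borel_measurable M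
        \<and> (AE \<omega> in M. (\<lambda>N. Mg N \<omega>) \<longlonglongrightarrow> Minf \<omega>)
        \<and> (AE \<omega> in M. (\<lambda>N. W N \<omega> / real N powr Lam) \<longlonglongrightarrow> Minf \<omega> / kap)"
proof (intro exI conjI)
  define Minf where "Minf \<omega> = lim (\<lambda>k. Mg (aa k) \<omega>)" for \<omega>
  show "Minf \<in> borel_measurable M"
    unfolding Minf_def by (rule borel_measurable_lim_metric) (use hW_meas[of "\<lambda>y. g (aa _) * y"] in simp)
  have A: "AE \<omega> in M. (\<lambda>N. Mg N \<omega>) \<longlonglongrightarrow> Minf \<omega>"
    using ae_summable by eventually_elim (simp add: Minf_def conv_of_summable)
  show "AE \<omega> in M. (\<lambda>N. Mg N \<omega>) \<longlonglongrightarrow> Minf \<omega>" by (rule A)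
  show "AE \<omega> in M. (\<lambda>N. W N \<omega> / real N powr Lam) \<longlonglongrightarrow> Minf \<omega> / kap"
    using A
  proof eventually_elim
    case (elim \<omega>)
    have lim1: "(\<lambda>N. Mg N \<omega> / (g N * real N powr Lam)) \<longlonglongrightarrow> Minf \<omega> / kap"
      by (intro tendsto_divide elim part3) (use kappa_pos in simp)
    have ev: "eventually (\<lambda>N. Mg N \<omega> / (g N * real N powr Lam) = W N \<omega> / real N powr Lam) sequentially"
      using eventually_gt_at_top[of 0]
    proof eventually_elim
      case (elim N)
      then show ?case using g_pos[of N] by simp
    qed
    show ?case using tendsto_cong[OF ev] lim1 by simp
  qed
qed

end

theorem theorem1:
  fixes M :: "'a measure" and X :: "nat \<Rightarrow> 'a \<Rightarrow> bool"
    and p :: nat and \<sigma> l w0 b0 :: real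
  assumes "prob_space M"
    and "p \<ge> 1" and "\<sigma> > 0" and "l > 0" and "w0 > 0" and "b0 \<ge> 0"
    and "\<And>n. X n \<in> measurable M (count_space UNIV)"
    and "\<And>n. AE \<omega> in M.
           real_cond_exp M (urnF M X n) (\<lambda>\<omega>. if X (Suc n) \<omega> then 1 else 0) \<omega>
             = urnW \<sigma> w0 X n \<omega> / urnT p \<sigma> l w0 b0 n"
  shows
    "(\<forall>N s. prob_space.expectation M (\<lambda>\<omega>. pochhammer (urnW \<sigma> w0 X N \<omega> / \<sigma>) s)
        = pochhammer (w0 / \<sigma>) s *
          (\<Prod>j<N. (urnT p \<sigma> l w0 b0 j + real s * \<sigma>) / urnT p \<sigma> l w0 b0 j))
   \<and> (\<forall>N (v::real). \<bar>v - 1\<bar> < 1 \<longrightarrow>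
        (\<lambda>s. (v - 1) ^ s / fact s *
              (\<Sum>r\<le>s. (-1) ^ (s - r) * lah s r * pochhammer (w0 / \<sigma>) r *
                 (\<Prod>j<N. (urnT p \<sigma> l w0 b0 j + real r * \<sigma>) / urnT p \<sigma> l w0 b0 j)))
        sums prob_space.expectation M (\<lambda>\<omega>. v powr (urnW \<sigma> w0 X N \<omega> / \<sigma>)))
   \<and> (\<lambda>N. urn_g p \<sigma> l w0 b0 N * real N powr urn_Lambda p \<sigma> l)
        \<longlonglongrightarrow> urn_kappa p \<sigma> l w0 b0
   \<and> (\<forall>N. \<forall>\<omega>\<in>space M. urn_g p \<sigma> l w0 b0 N * urnW \<sigma> w0 X N \<omega> \<ge> 0)
   \<and> (\<forall>N. (\<lambda>\<omega>. urn_g p \<sigma> l w0 b0 N * urnW \<sigma> w0 X N \<omega>) \<in> borel_measurable (urnF M X N))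
   \<and> (\<forall>N. integrable M (\<lambda>\<omega>. urn_g p \<sigma> l w0 b0 N * urnW \<sigma> w0 X N \<omega>))
   \<and> (\<forall>N. AE \<omega> in M.
        real_cond_exp M (urnF M X N)
          (\<lambda>\<omega>. urn_g p \<sigma> l w0 b0 (Suc N) * urnW \<sigma> w0 X (Suc N) \<omega>) \<omega>
        = urn_g p \<sigma> l w0 b0 N * urnW \<sigma> w0 X N \<omega>)
   \<and> (\<exists>Minf. Minf \<in> borel_measurable M
        \<and> (AE \<omega> in M. (\<lambda>N. urn_g p \<sigma> l w0 b0 N * urnW \<sigma> w0 X N \<omega>) \<longlonglongrightarrow> Minf \<omega>)
        \<and> (AE \<omega> in M. (\<lambda>N. urnW \<sigma> w0 X N \<omega> / real N powr urn_Lambda p \<sigma> l)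
                         \<longlonglongrightarrow> Minf \<omega> / urn_kappa p \<sigma> l w0 b0))"
proof -
  interpret U: urn M X p \<sigma> l w0 b0
    by (rule urn.intro) (fact assms)+
  show ?thesis
  proof (intro conjI allI impI ballI)
    fix N s show "prob_space.expectation M (\<lambda>\<omega>. pochhammer (urnW \<sigma> w0 X N \<omega> / \<sigma>) s)
        = pochhammer (w0 / \<sigma>) s * (\<Prod>j<N. (urnT p \<sigma> l w0 b0 j + real s * \<sigma>) / urnT p \<sigma> l w0 b0 j)"
      by (rule U.part1)
  next
    fix N and v :: real assume "\<bar>v - 1\<bar> < 1"
    then show "(\<lambda>s. (v - 1) ^ s / fact s *
              (\<Sum>r\<le>s. (-1) ^ (s - r) * lah s r * pochhammer (w0 / \<sigma>) r *
                 (\<Prod>j<N. (urnT p \<sigma> l w0 b0 j + real r * \<sigma>) / urnT p \<sigma> l w0 b0 j)))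
        sums prob_space.expectation M (\<lambda>\<omega>. v powr (urnW \<sigma> w0 X N \<omega> / \<sigma>))"
      by (rule U.part2)
  next
    show "(\<lambda>N. urn_g p \<sigma> l w0 b0 N * real N powr urn_Lambda p \<sigma> l) \<longlonglongrightarrow> urn_kappa p \<sigma> l w0 b0"
      by (rule U.part3)
  next
    fix N \<omega> show "urn_g p \<sigma> l w0 b0 N * urnW \<sigma> w0 X N \<omega> \<ge> 0" by (rule U.Mg_nonneg)
  next
    fix N show "(\<lambda>\<omega>. urn_g p \<sigma> l w0 b0 N * urnW \<sigma> w0 X N \<omega>) \<in> borel_measurable (urnF M X N)"
      by (rule U.Mg_measF)
  next
    fix N show "integrable M (\<lambda>\<omega>. urn_g p \<sigma> l w0 b0 N * urnW \<sigma> w0 X N \<omega>)"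
      by (rule U.Mg_int)
  next
    fix N show "AE \<omega> in M.
        real_cond_exp M (urnF M X N)
          (\<lambda>\<omega>. urn_g p \<sigma> l w0 b0 (Suc N) * urnW \<sigma> w0 X (Suc N) \<omega>) \<omega>
        = urn_g p \<sigma> l w0 b0 N * urnW \<sigma> w0 X N \<omega>"
      by (rule U.Mg_mart)
  next
    show "\<exists>Minf. Minf \<in> borel_measurable M
        \<and> (AE \<omega> in M. (\<lambda>N. urn_g p \<sigma> l w0 b0 N * urnW \<sigma> w0 X N \<omega>) \<longlonglongrightarrow> Minf \<omega>)
        \<and> (AE \<omega> in M. (\<lambda>N. urnW \<sigma> w0 X N \<omega> / real N powr urn_Lambda p \<sigma> l)
                         \<longlonglongrightarrow> Minf \<omega> / urn_kappa p \<sigma> l w0 b0)"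
      by (rule U.ae_conv)
  qed
qed

end
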